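(* Let $c_2,c_3$ be constants, $\mu(t)=t^2+c_2t+c_3$, and for $n\ge 0$ let $\vartheta_n(t)=(-4)^{-n}(2t+1/2+c_2)_n(-2t+1/2-c_2)_n$. Let $\{P_n\}_{n\ge0}$ be a sequence of monic polynomials in $\mu(t)$, $\deg P_n=n$, satisfying $$\mu(t)P_n=P_{n+1}+\beta_nP_n+\gamma_nP_{n-1}\quad(n\ge 0),\qquad P_{-1}=0,\ P_0=1,$$ and write $P_n=\sum_{k=0}^{n}A_{n,k}\vartheta_k(t)$, so that $A=(A_{n,k})_{n,k\ge0}$ is lower triangular with unit diagonal. Define the numbers $f_n$ by $\mu(t)\vartheta_n(t)=\vartheta_{n+1}(t)+f_n\vartheta_n(t)$, $n\ge0$. Then $$f_n=-\frac{c_2^2}{4}+\frac{(2n+1)^2}{16}+c_3,$$ and $$L\,A=A\,\mathbf{X}^1,\qquad \mathbf{X}^1:=X+\operatorname{diag}\{f_0,f_1,f_2,\ldots\},$$ where $L$ is the infinite tridiagonal matrix with diagonal entries $L_{n,n}=\beta_n$ ($n\ge0$), superdiagonal entries $L_{n,n+1}=1$, subdiagonal entries $L_{n,n-1}=\gamma_n$ ($n\ge1$), all other entries zero, and $X$ is the infinite matrix with $X_{n,n+1}=1$ and all other entries zero.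
   Context: Here $(a)_n=a(a+1)\cdots(a+n-1)$, $(a)_0=1$, is the Pochhammer symbol; each $\vartheta_n(t)$ is a monic polynomial of degree $n$ in the variable $\mu(t)$, and $\{\vartheta_n\}$ is a basis of the polynomials in $\mu(t)$. Indices of infinite matrices start at $0$. *)

theory Defs
  imports "HOL-Computational_Algebra.Polynomial"
begin

definition mu_poly :: "'a::field_char_0 \<Rightarrow> 'a \<Rightarrow> 'a poly" where
  "mu_poly c2 c3 = [:c3, c2, 1:]"

definition theta_poly :: "'a::field_char_0 \<Rightarrow> nat \<Rightarrow> 'a poly" where
  "theta_poly c2 n = smult (inverse ((- 4) ^ n))
     (pochhammer [:1/2 + c2, 2:] n * pochhammer [:1/2 - c2, -2:] n)"

text \<open>Product of infinite matrices (indices from 0), summing over the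
  (assumed finite) support of the rows of the left factor.\<close>
definition inf_mat_mult ::
  "(nat \<Rightarrow> nat \<Rightarrow> 'a::comm_semiring_1) \<Rightarrow> (nat \<Rightarrow> nat \<Rightarrow> 'a) \<Rightarrow> nat \<Rightarrow> nat \<Rightarrow> 'a" where
  "inf_mat_mult M N i k = (\<Sum>j | M i j \<noteq> 0. M i j * N j k)"

definition L_mat :: "(nat \<Rightarrow> 'a) \<Rightarrow> (nat \<Rightarrow> 'a) \<Rightarrow> nat \<Rightarrow> nat \<Rightarrow> 'a::zero_neq_one" where
  "L_mat \<beta> \<gamma> n j = (if j = Suc n then 1 else if j = n then \<beta> n
                     else if Suc j = n then \<gamma> n else 0)"

definition X_mat :: "nat \<Rightarrow> nat \<Rightarrow> 'a::zero_neq_one" where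
  "X_mat n j = (if j = Suc n then 1 else 0)"

definition X1_mat :: "(nat \<Rightarrow> 'a) \<Rightarrow> nat \<Rightarrow> nat \<Rightarrow> 'a::{zero_neq_one,plus}" where
  "X1_mat f n j = X_mat n j + (if j = n then f n else 0)"

end

theory Submission
  imports Defs
begin

lemma smult_sum_right: "smult c (sum g S) = (\<Sum>k\<in>S. smult c (g k))"
  by (induction S rule: infinite_finite_induct) (auto simp: smult_add_right)

lemma aux_rec: "M = smult a Q + [:f:] \<Longrightarrow> M * smult c X = smult c (smult a Q * X) + smult f (smult c (X::'a::field poly))"
  by (simp add: algebra_simps)

lemma theta_rec:
  fixes c2 c3 :: "'a::field_char_0"
  shows "mu_poly c2 c3 * theta_poly c2 n = theta_poly c2 (Suc n)
     + smult (- (c2 ^ 2) / 4 + (2 * of_nat n + 1) ^ 2 / 16 + c3) (theta_poly c2 n)"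
proof -
  define X where "X = pochhammer [:1/2 + c2, 2:] n * pochhammer [:1/2 - c2, -2:] n"
  define f where "f = - (c2 ^ 2) / 4 + (2 * of_nat n + 1) ^ 2 / 16 + (c3::'a)"
  have pq: "([:1/2+c2,2:] + of_nat n) * ([:1/2-c2,-2:] + of_nat n) = [:(1/2+c2+of_nat n)*(1/2-c2+of_nat n), -4*c2, -4::'a:]"
    by (simp add: of_nat_poly algebra_simps)
  have key: "mu_poly c2 c3 = smult (-1/4) ([:(1/2+c2+of_nat n)*(1/2-c2+of_nat n), -4*c2, -4::'a:]) + [:f:]"
    unfolding mu_poly_def f_def by (simp add: field_simps power2_eq_square)
  define Q where "Q = [:(1/2+c2+of_nat n)*(1/2-c2+of_nat n), -4*c2, -4::'a:]"
  have pp: "pochhammer [:1/2 + c2, 2:] (Suc n) * pochhammer [:1/2 - c2, -2:] (Suc n) = X * Q"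
    unfolding pochhammer_Suc X_def Q_def pq[symmetric] by (simp add: mult_ac)
  have inv: "inverse ((- 4) ^ Suc n) = inverse ((- 4) ^ n) * (-1/4::'a)"
    by (simp add: field_simps)
  have th1: "theta_poly c2 (Suc n) = smult (inverse ((- 4) ^ n)) (smult (-1/4) Q * X)"
    unfolding theta_poly_def pp inv by (simp add: mult.commute)
  have th0: "theta_poly c2 n = smult (inverse ((- 4) ^ n)) X" unfolding theta_poly_def X_def ..
  show ?thesis
    unfolding th1 th0 f_def[symmetric]
    by (rule aux_rec[OF key[folded Q_def]])
qed

lemma theta_deg:
  fixes c2 :: "'a::field_char_0"
  shows "degree (theta_poly c2 n) = 2*n \<and> coeff (theta_poly c2 n) (2*n) = 1"
proof (induction n)
  case 0
  then show ?case by (simp add: theta_poly_def)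
next
  case (Suc n)
  define f where "f = - (c2 ^ 2) / 4 + (2 * of_nat n + 1) ^ 2 / 16 + (0::'a)"
  have e: "theta_poly c2 (Suc n) = mu_poly c2 0 * theta_poly c2 n - smult f (theta_poly c2 n)"
    using theta_rec[of c2 0 n] unfolding f_def by simp
  have nz: "theta_poly c2 n \<noteq> 0" using Suc by auto
  have mn: "mu_poly c2 0 \<noteq> 0" "degree (mu_poly c2 0) = 2" by (simp_all add: mu_poly_def)
  have dm: "degree (mu_poly c2 0 * theta_poly c2 n) = 2*Suc n"
    using nz Suc mn by (simp add: degree_mult_eq)
  have cm: "coeff (mu_poly c2 0 * theta_poly c2 n) (2*Suc n) = 1"
    using coeff_mult_degree_sum[of "mu_poly c2 0" "theta_poly c2 n"] Suc
    by (simp add: mu_poly_def)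
  have ds: "degree (smult f (theta_poly c2 n)) < 2 * Suc n"
    using Suc by simp
  have "degree (theta_poly c2 (Suc n)) = 2*Suc n"
    unfolding e using dm ds degree_add_eq_left[of "- smult f (theta_poly c2 n)" "mu_poly c2 0 * theta_poly c2 n"]
    by (simp del: degree_smult_eq)
  moreover have "coeff (theta_poly c2 (Suc n)) (2*Suc n) = 1"
    unfolding e using cm Suc coeff_eq_0[of "theta_poly c2 n" "2*Suc n"] by simp
  ultimately show ?case by simp
qed

lemma theta_indep:
  fixes c2 :: "'a::field_char_0"
  assumes "(\<Sum>k\<le>N. smult (a k) (theta_poly c2 k)) = 0" "k \<le> N"
  shows "a k = 0"
  using assms
proof (induction N arbitrary: k)
  case 0
  then show ?case using theta_deg[of c2 0] by (simp add: theta_poly_def)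
next
  case (Suc N)
  have z: "coeff (theta_poly c2 j) (2 * Suc N) = 0" if "j \<le> N" for j
    using theta_deg[of c2 j] that by (intro coeff_eq_0) simp
  have c: "coeff (\<Sum>k\<le>Suc N. smult (a k) (theta_poly c2 k)) (2 * Suc N) = a (Suc N)"
    using z theta_deg[of c2 "Suc N"] by (simp add: coeff_sum)
  have aS: "a (Suc N) = 0" using c Suc.prems(1) by (metis coeff_0)
  hence "(\<Sum>k\<le>N. smult (a k) (theta_poly c2 k)) = 0" using Suc.prems by simp
  then show ?case using Suc aS by (cases "k = Suc N") auto
qed

lemma L_sum:
  fixes \<beta> \<gamma> g :: "nat \<Rightarrow> 'a::field"
  shows "inf_mat_mult (L_mat \<beta> \<gamma>) B i k
     = B (Suc i) k + \<beta> i * B i k + (if i = 0 then 0 else \<gamma> i * B (i - 1) k)"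
proof -
  define T where "T = (if i = 0 then {Suc i, i} else {Suc i, i, i - 1})"
  have sub: "{j. L_mat \<beta> \<gamma> i j \<noteq> 0} \<subseteq> T"
    unfolding T_def L_mat_def by (auto split: if_splits)
  have "inf_mat_mult (L_mat \<beta> \<gamma>) B i k = (\<Sum>j\<in>T. L_mat \<beta> \<gamma> i j * B j k)"
    unfolding inf_mat_mult_def
    by (rule sum.mono_neutral_left) (use sub in \<open>auto simp: T_def\<close>)
  also have "\<dots> = B (Suc i) k + \<beta> i * B i k + (if i = 0 then 0 else \<gamma> i * B (i - 1) k)"
    by (cases i) (auto simp: T_def L_mat_def)
  finally show ?thesis .
qed

lemma X1_sum:
  fixes A :: "nat \<Rightarrow> nat \<Rightarrow> 'a::field"
  assumes A_lower: "\<And>n k. n < k \<Longrightarrow> A n k = 0" and iM: "i \<le> M" and kM: "k \<le> M"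
  shows "inf_mat_mult A (X1_mat F) i k = (if k = 0 then 0 else A i (k - 1)) + A i k * F k"
proof -
  have sub: "{j. A i j \<noteq> 0} \<subseteq> {..M}"
    using A_lower iM by (auto simp: not_less[symmetric])
  have "inf_mat_mult A (X1_mat F) i k = (\<Sum>j\<le>M. A i j * X1_mat F j k)"
    unfolding inf_mat_mult_def
    by (rule sum.mono_neutral_left) (use sub in auto)
  also have "\<dots> = (\<Sum>j\<le>M. A i j * X_mat j k) + (\<Sum>j\<le>M. if j = k then A i j * F j else 0)"
    unfolding sum.distrib[symmetric] by (rule sum.cong) (auto simp: X1_mat_def distrib_left)
  also have "(\<Sum>j\<le>M. if j = k then A i j * F j else 0) = A i k * F k"
    using kM by (simp add: sum.delta')
  also have "(\<Sum>j\<le>M. A i j * X_mat j k) = (if k = 0 then 0 else A i (k - 1))"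
  proof (cases k)
    case 0 then show ?thesis by (simp add: X_mat_def)
  next
    case (Suc m)
    have "(\<Sum>j\<le>M. A i j * X_mat j k) = (\<Sum>j\<le>M. if j = m then A i j else 0)"
      by (rule sum.cong) (auto simp: X_mat_def Suc)
    also have "\<dots> = A i m" using kM Suc by (simp add: sum.delta')
    finally show ?thesis using Suc by simp
  qed
  finally show ?thesis .
qed

theorem lemma2p1:
  fixes c2 c3 :: "'a::field_char_0"
    and P :: "nat \<Rightarrow> 'a poly"
    and \<beta> \<gamma> :: "nat \<Rightarrow> 'a"
    and A :: "nat \<Rightarrow> nat \<Rightarrow> 'a"
  assumes monic_in_mu: "\<And>n. \<exists>Q. degree Q = n \<and> lead_coeff Q = 1 \<and>
                                 P n = pcompose Q (mu_poly c2 c3)"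
    and P0: "P 0 = 1"
    and rec0: "mu_poly c2 c3 * P 0 = P 1 + smult (\<beta> 0) (P 0)"
    and rec: "\<And>n. n \<ge> 1 \<Longrightarrow>
               mu_poly c2 c3 * P n = P (Suc n) + smult (\<beta> n) (P n) + smult (\<gamma> n) (P (n - 1))"
    and A_lower: "\<And>n k. n < k \<Longrightarrow> A n k = 0"
    and A_expand: "\<And>n. P n = (\<Sum>k\<le>n. smult (A n k) (theta_poly c2 k))"
  shows "(\<forall>n. mu_poly c2 c3 * theta_poly c2 n
              = theta_poly c2 (Suc n)
                + smult (- (c2 ^ 2) / 4 + (2 * of_nat n + 1) ^ 2 / 16 + c3) (theta_poly c2 n))
       \<and> inf_mat_mult (L_mat \<beta> \<gamma>) A
         = inf_mat_mult A (X1_mat (\<lambda>n. - (c2 ^ 2) / 4 + (2 * of_nat n + 1) ^ 2 / 16 + c3))"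
proof -
  define F :: "nat \<Rightarrow> 'a" where "F n = - (c2 ^ 2) / 4 + (2 * of_nat n + 1) ^ 2 / 16 + c3" for n
  let ?mu = "mu_poly c2 c3"
  let ?th = "theta_poly c2"
  have thr: "?mu * ?th n = ?th (Suc n) + smult (F n) (?th n)" for n
    unfolding F_def by (rule theta_rec)
  have ex: "P n = (\<Sum>j\<le>M. smult (A n j) (?th j))" if "n \<le> M" for n M
  proof -
    have "P n = (\<Sum>j\<le>n. smult (A n j) (?th j))" by (rule A_expand)
    also have "\<dots> = (\<Sum>j\<le>M. smult (A n j) (?th j))"
      by (rule sum.mono_neutral_left) (use that A_lower in auto)
    finally show ?thesis .
  qed
  have ent: "inf_mat_mult (L_mat \<beta> \<gamma>) A i k = inf_mat_mult A (X1_mat F) i k" for i k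
  proof -
    define M where "M = i + k + 1"
    define cL where "cL j = (if j = 0 then 0 else A i (j - 1)) + A i j * F j" for j
    define cR where "cR j = A (Suc i) j + \<beta> i * A i j + (if i = 0 then 0 else \<gamma> i * A (i - 1) j)" for j
    have E1: "?mu * P i = (\<Sum>j\<le>Suc M. smult (cL j) (?th j))"
    proof -
      have "?mu * P i = (\<Sum>j\<le>M. smult (A i j) (?mu * ?th j))"
      proof -
        have "P i = (\<Sum>j\<le>M. smult (A i j) (?th j))" by (rule ex) (simp add: M_def)
        then show ?thesis by (simp only: sum_distrib_left mult_smult_right)
      qed
      also have "\<dots> = (\<Sum>j\<le>M. smult (A i j) (?th (Suc j))) + (\<Sum>j\<le>M. smult (A i j * F j) (?th j))"
        by (simp add: thr smult_add_right sum.distrib)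
      also have "(\<Sum>j\<le>M. smult (A i j) (?th (Suc j)))
          = (\<Sum>j\<le>Suc M. smult (if j = 0 then 0 else A i (j - 1)) (?th j))"
        by (subst sum.atMost_Suc_shift) simp
      also have "(\<Sum>j\<le>M. smult (A i j * F j) (?th j)) = (\<Sum>j\<le>Suc M. smult (A i j * F j) (?th j))"
        using A_lower[of i "Suc M"] by (simp add: M_def)
      finally show ?thesis by (simp add: cL_def sum.distrib smult_add_left)
    qed
    have E2: "?mu * P i = (\<Sum>j\<le>Suc M. smult (cR j) (?th j))"
    proof (cases "i = 0")
      case True
      have "?mu * P i = P (Suc i) + smult (\<beta> i) (P i)" using rec0 True by simp
      also have "\<dots> = (\<Sum>j\<le>Suc M. smult (A (Suc i) j) (?th j)) + smult (\<beta> i) (\<Sum>j\<le>Suc M. smult (A i j) (?th j))"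
        using ex[of "Suc i" "Suc M"] ex[of i "Suc M"] by (simp add: M_def)
      finally show ?thesis using True
        by (simp add: cR_def smult_sum_right sum.distrib smult_add_left del: sum.atMost_Suc)
    next
      case False
      have "?mu * P i = P (Suc i) + smult (\<beta> i) (P i) + smult (\<gamma> i) (P (i - 1))" using rec False by simp
      also have "\<dots> = (\<Sum>j\<le>Suc M. smult (A (Suc i) j) (?th j)) + smult (\<beta> i) (\<Sum>j\<le>Suc M. smult (A i j) (?th j))
           + smult (\<gamma> i) (\<Sum>j\<le>Suc M. smult (A (i - 1) j) (?th j))"
        using ex[of "Suc i" "Suc M"] ex[of i "Suc M"] ex[of "i - 1" "Suc M"] by (simp add: M_def)
      finally show ?thesis using False
        by (simp add: cR_def smult_sum_right sum.distrib smult_add_left del: sum.atMost_Suc)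
    qed
    have "(\<Sum>j\<le>Suc M. smult (cL j - cR j) (?th j)) = 0"
      using E1 E2 by (simp add: smult_diff_left sum_subtractf)
    hence "cL k - cR k = 0" by (rule theta_indep) (simp add: M_def)
    hence "cL k = cR k" by simp
    moreover have "inf_mat_mult (L_mat \<beta> \<gamma>) A i k = cR k" unfolding cR_def by (rule L_sum)
    moreover have "inf_mat_mult A (X1_mat F) i k = cL k"
      unfolding cL_def by (rule X1_sum[OF A_lower, where i=i and M=M]) (simp_all add: M_def)
    ultimately show ?thesis by simp
  qed
  show ?thesis
  proof
    show "\<forall>n. ?mu * ?th n = ?th (Suc n) + smult (- (c2 ^ 2) / 4 + (2 * of_nat n + 1) ^ 2 / 16 + c3) (?th n)"
      using theta_rec by blast
    show "inf_mat_mult (L_mat \<beta> \<gamma>) A = inf_mat_mult A (X1_mat (\<lambda>n. - (c2 ^ 2) / 4 + (2 * of_nat n + 1) ^ 2 / 16 + c3))"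
      using ent unfolding F_def by (intro ext) blast
  qed
qed

end
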